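(* Let $1<p\le\infty$ and $m\in\mathbb N_0$. Let $\varphi\in C_0^k(\mathbb R)$ with $\operatorname{supp}\varphi\subset[0,1]$, $\varphi>0$ on $(0,1)$, and $k>\frac{mp}{p-1}+1$ (read as $k>m+1$ if $p=\infty$), and assume that $\varphi^{(k)}$ has only finitely many zeros in $[0,1]$. Then for all $0\le n\le m$, $$\frac{|\varphi^{(n)}(t)|}{|\varphi(t)|^{1/p}}\in L_\infty([0,1]).$$
   Context: $C_0^k(\mathbb R)$: compactly supported functions whose derivatives up to order $k$ are uniformly continuous. *)

theory Defs
  imports "HOL-Analysis.Analysis"
begin

definition nderiv :: "nat \<Rightarrow> (real \<Rightarrow> real) \<Rightarrow> real \<Rightarrow> real" where
  "nderiv j f = (deriv ^^ j) f"

definition C0k :: "nat \<Rightarrow> (real \<Rightarrow> real) \<Rightarrow> bool" where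
  "C0k k f \<longleftrightarrow>
     compact (closure {x. f x \<noteq> 0}) \<and>
     (\<forall>j<k. nderiv j f differentiable_on UNIV) \<and>
     (\<forall>j\<le>k. uniformly_continuous_on UNIV (nderiv j f))"

definition L_infty_on :: "real set \<Rightarrow> (real \<Rightarrow> real) \<Rightarrow> bool" where
  "L_infty_on S f \<longleftrightarrow>
     f \<in> borel_measurable (restrict_space lborel S) \<and>
     (\<exists>C. AE x in lborel. x \<in> S \<longrightarrow> \<bar>f x\<bar> \<le> C)"

end

theory Submission
  imports Defs
begin


lemma incr_from_deriv:
  fixes f f' :: "real \<Rightarrow> real"
  assumes "a \<le> b" "\<And>x. a \<le> x \<Longrightarrow> x \<le> b \<Longrightarrow> DERIV f x :> f' x"
    "\<And>x. a \<le> x \<Longrightarrow> x \<le> b \<Longrightarrow> f' x \<ge> 0"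
  shows "f a \<le> f b"
proof (cases "a = b")
  case False
  then have "a < b" using assms(1) by simp
  from MVT2[OF this assms(2)] obtain z where "a < z" "z < b" "f b - f a = (b - a) * f' z" by auto
  moreover have "f' z \<ge> 0" using assms(3) \<open>a < z\<close> \<open>z < b\<close> by simp
  ultimately show ?thesis using \<open>a < b\<close>
    by (metis diff_ge_0_iff_ge less_eq_real_def mult_nonneg_nonneg)
qed simp

locale chain =
  fixes f :: "nat \<Rightarrow> real \<Rightarrow> real" and L :: nat and \<epsilon> :: real
  assumes eps: "\<epsilon> > 0"
    and der: "\<And>j s. j \<le> L \<Longrightarrow> 0 \<le> s \<Longrightarrow> s \<le> \<epsilon> \<Longrightarrow> (f j has_real_derivative f (Suc j) s) (at s)"
    and zero: "\<And>j. j \<le> L \<Longrightarrow> f j 0 = 0"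
    and top: "\<And>s. 0 \<le> s \<Longrightarrow> s \<le> \<epsilon> \<Longrightarrow> f (Suc L) s \<ge> 0"
begin

lemma nonneg: "j \<le> Suc L \<Longrightarrow> 0 \<le> s \<Longrightarrow> s \<le> \<epsilon> \<Longrightarrow> f j s \<ge> 0"
proof (induction j arbitrary: s rule: inc_induct)
  case base
  then show ?case using top by simp
next
  case (step n)
  have "f n 0 \<le> f n s"
    by (rule incr_from_deriv[of 0 s "f n" "f (Suc n)"]) (use step der in auto)
  then show ?case using zero step by simp
qed

lemma mono: "j \<le> L \<Longrightarrow> 0 \<le> s \<Longrightarrow> s \<le> t \<Longrightarrow> t \<le> \<epsilon> \<Longrightarrow> f j s \<le> f j t"
  by (rule incr_from_deriv[of s t "f j" "f (Suc j)"]) (auto intro: der nonneg)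

end

locale chainpos = chain +
  assumes pos0: "\<And>t. 0 < t \<Longrightarrow> t \<le> \<epsilon> \<Longrightarrow> f 0 t > 0"
begin

lemma pos: "j \<le> L \<Longrightarrow> 0 < t \<Longrightarrow> t \<le> \<epsilon> \<Longrightarrow> f j t > 0"
proof (induction j)
  case 0
  then show ?case using pos0 by simp
next
  case (Suc j)
  have IH: "f j t > 0" using Suc by simp
  show ?case
  proof (rule ccontr)
    assume "\<not> f (Suc j) t > 0"
    then have t0: "f (Suc j) t = 0" using nonneg[of "Suc j" t] Suc by simp
    obtain z where z: "0 < z" "z < t" "f j t - f j 0 = (t - 0) * f (Suc j) z"
      using MVT2[of 0 t "f j" "f (Suc j)"] Suc der by auto
    have "f (Suc j) z \<le> f (Suc j) t" using mono[of "Suc j" z t] Suc z by simp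
    moreover have "f (Suc j) z \<ge> 0" using nonneg[of "Suc j" z] Suc z by simp
    ultimately have "f (Suc j) z = 0" using t0 by simp
    then show False using z IH zero[of j] Suc by simp
  qed
qed

lemma tangent:
  assumes "Suc i < L" "0 < t" "t \<le> \<epsilon>"
  shows "f (Suc i) t ^ 2 \<le> 2 * f i t * f (Suc (Suc i)) t"
proof -
  define x where "x = f (Suc i) t"
  define \<sigma> where "\<sigma> = f (Suc (Suc i)) t"
  have xp: "x > 0" unfolding x_def using pos assms by simp
  have sp: "\<sigma> > 0" unfolding \<sigma>_def using pos assms by simp
  obtain z where z: "0 < z" "z < t" "f (Suc i) t - f (Suc i) 0 = (t - 0) * f (Suc (Suc i)) z"
    using MVT2[of 0 t "f (Suc i)" "f (Suc (Suc i))"] assms der by auto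
  have "f (Suc (Suc i)) z \<le> \<sigma>" unfolding \<sigma>_def using mono[of "Suc (Suc i)" z t] assms z by simp
  then have "x \<le> t * \<sigma>" using z zero[of "Suc i"] assms unfolding x_def
    by (simp add: mult_left_mono)
  define \<tau> where "\<tau> = t - x / \<sigma>"
  have tau0: "0 \<le> \<tau>" unfolding \<tau>_def using \<open>x \<le> t * \<sigma>\<close> sp by (simp add: field_simps)
  have taut: "\<tau> \<le> t" unfolding \<tau>_def using xp sp by simp
  have lin: "x - \<sigma> * (t - s) \<le> f (Suc i) s" if "0 \<le> s" "s \<le> t" for s
  proof -
    have "\<sigma> * s - f (Suc i) s \<le> \<sigma> * t - f (Suc i) t"
    proof (rule incr_from_deriv[of s t _ "\<lambda>y. \<sigma> - f (Suc (Suc i)) y"])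
      fix y assume "s \<le> y" "y \<le> t"
      then show "((\<lambda>y. \<sigma> * y - f (Suc i) y) has_real_derivative \<sigma> - f (Suc (Suc i)) y) (at y)"
        using der[of "Suc i" y] assms that
        by (auto intro!: derivative_eq_intros)
      show "0 \<le> \<sigma> - f (Suc (Suc i)) y" unfolding \<sigma>_def
        using mono[of "Suc (Suc i)" y t] assms that \<open>s \<le> y\<close> \<open>y \<le> t\<close> by simp
    qed (use that in simp)
    then show ?thesis unfolding x_def by (simp add: algebra_simps)
  qed
  have "f i \<tau> - x * \<tau> - \<sigma> * (t - \<tau>)^2 / 2 \<le> f i t - x * t - \<sigma> * (t - t)^2 / 2"
  proof (rule incr_from_deriv[of \<tau> t _ "\<lambda>y. f (Suc i) y - x + \<sigma> * (t - y)"])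
    fix y assume y: "\<tau> \<le> y" "y \<le> t"
    then show "((\<lambda>y. f i y - x * y - \<sigma> * (t - y)^2 / 2) has_real_derivative f (Suc i) y - x + \<sigma> * (t - y)) (at y)"
      using der[of i y] assms tau0
      by (auto intro!: derivative_eq_intros simp: algebra_simps power2_eq_square field_simps)
    show "0 \<le> f (Suc i) y - x + \<sigma> * (t - y)" using lin[of y] y tau0 by simp
  qed (use taut in simp)
  moreover have "f i \<tau> \<ge> 0" using nonneg[of i \<tau>] tau0 taut assms by simp
  moreover have "t - \<tau> = x / \<sigma>" unfolding \<tau>_def by simp
  ultimately have "x * (x / \<sigma>) - \<sigma> * (x / \<sigma>)^2 / 2 \<le> f i t"
    by (simp add: algebra_simps)
  moreover have "x * (x / \<sigma>) - \<sigma> * (x / \<sigma>)^2 / 2 = x^2 / (2 * \<sigma>)"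
    using sp by (simp add: field_simps power2_eq_square)
  ultimately have "x^2 / (2 * \<sigma>) \<le> f i t" by simp
  then show ?thesis using sp unfolding x_def[symmetric] \<sigma>_def[symmetric]
    by (simp add: field_simps mult.commute mult.left_commute)
qed

end


lemma alg1:
  fixes A B C E K :: real and q :: nat
  assumes "A > 0" "B \<ge> 0" "C \<ge> 0" "E \<ge> 0" "A^2 \<le> 2*B*C" "C^q \<le> K * A^(q-1) * E" "q \<ge> 1"
  shows "A^(q+1) \<le> (2^q*K) * B^q * E"
proof -
  have "(A^2)^q \<le> (2*B*C)^q" using assms by (intro power_mono) auto
  also have "\<dots> = 2^q * B^q * C^q" by (simp add: power_mult_distrib)
  also have "\<dots> \<le> 2^q * B^q * (K * A^(q-1) * E)"
    using assms by (intro mult_left_mono) auto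
  finally have 1: "(A^2)^q \<le> ((2^q*K) * B^q * E) * A^(q-1)"
    by (simp add: algebra_simps)
  have "(A^2)^q = A^((q+1) + (q-1))"
    using assms(7) by (simp add: power_mult[symmetric] mult.commute mult_2_right)
  also have "\<dots> = A^(q+1) * A^(q-1)" by (rule power_add)
  finally have "(A^2)^q = A^(q+1) * A^(q-1)" .
  with 1 have "A^(q+1) * A^(q-1) \<le> ((2^q*K) * B^q * E) * A^(q-1)" by simp
  then show ?thesis using assms(1) by (simp add: mult_le_cancel_right_pos)
qed

lemma alg2:
  fixes x y z K1 K2 :: real and q L :: nat
  assumes "x \<ge> 0" "y \<ge> 0" "z \<ge> 0" "K1 \<ge> 0" "K2 \<ge> 0" "q \<ge> 1"
    "x^q \<le> K1 * y^(q-1)" "y^L \<le> K2 * z^q"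
  shows "x^L \<le> max 1 (K1^L * K2^(q-1)) * z^(q-1)"
proof -
  define K3 where "K3 = max 1 (K1^L * K2^(q-1))"
  have K3: "K3 \<ge> 1" unfolding K3_def by simp
  have "(x^L)^q = (x^q)^L" by (simp add: power_mult[symmetric] mult.commute)
  also have "\<dots> \<le> (K1 * y^(q-1))^L" using assms by (intro power_mono) auto
  also have "\<dots> = K1^L * (y^L)^(q-1)" by (simp add: power_mult_distrib power_mult[symmetric] mult.commute)
  also have "\<dots> \<le> K1^L * (K2 * z^q)^(q-1)"
    using assms by (intro mult_left_mono power_mono) auto
  also have "\<dots> = (K1^L * K2^(q-1)) * (z^(q-1))^q"
    by (simp add: power_mult_distrib power_mult[symmetric] mult.commute)
  also have "\<dots> \<le> K3 * (z^(q-1))^q" unfolding K3_def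
    using assms by (intro mult_right_mono) auto
  also have "\<dots> \<le> K3^q * (z^(q-1))^q"
    using K3 assms by (intro mult_right_mono) (auto intro: power_increasing[of 1 q K3, simplified])
  also have "\<dots> = (K3 * z^(q-1))^Suc (q-1)" using assms(6) by (simp add: power_mult_distrib)
  finally have "(x^L)^Suc (q-1) \<le> (K3 * z^(q-1))^Suc (q-1)" using assms(6) by simp
  then show ?thesis unfolding K3_def[symmetric]
    by (rule power_le_imp_le_base) (use K3 assms in auto)
qed

context chainpos begin

lemma Dlem:
  assumes "Suc i < L"
  shows "\<exists>K. \<forall>t. 0 < t \<longrightarrow> t \<le> \<epsilon> \<longrightarrow> f (Suc i) t ^ (L - i) \<le> K * f i t ^ (L - Suc i) * f L t"
proof -
  have "i \<le> L - 2" using assms by simp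
  then show ?thesis
  proof (induction i rule: inc_induct)
    case base
    have e: "Suc (L - 2) = L - 1" "Suc (Suc (L-2)) = L" "L - (L - 2) = 2" "L - Suc (L - 2) = 1"
      using assms by auto
    show ?case
      using tangent[of "L-2"] assms unfolding e by (intro exI[of _ 2]) (auto simp: e)
  next
    case (step n)
    then obtain K where K: "\<And>t. 0 < t \<Longrightarrow> t \<le> \<epsilon> \<Longrightarrow>
       f (Suc (Suc n)) t ^ (L - Suc n) \<le> K * f (Suc n) t ^ (L - Suc (Suc n)) * f L t" by blast
    show ?case
    proof (intro exI[of _ "2^(L - Suc n) * K"] allI impI)
      fix t assume t: "0 < t" "t \<le> \<epsilon>"
      have q: "L - Suc (Suc n) = L - Suc n - 1" "L - n = L - Suc n + 1" using step by auto
      show "f (Suc n) t ^ (L - n) \<le> 2 ^ (L - Suc n) * K * f n t ^ (L - Suc n) * f L t"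
      proof -
        have h1: "f (Suc n) t > 0" using pos[of "Suc n" t] step t by simp
        have h2: "f n t \<ge> 0" "f (Suc (Suc n)) t \<ge> 0" "f L t \<ge> 0"
          using nonneg[of n t] nonneg[of "Suc (Suc n)" t] nonneg[of L t] step t by simp_all
        have h3: "f (Suc n) t ^ 2 \<le> 2 * f n t * f (Suc (Suc n)) t"
          using tangent[of n t] step t by simp
        have h4: "f (Suc (Suc n)) t ^ (L - Suc n) \<le> K * f (Suc n) t ^ (L - Suc n - 1) * f L t"
          using K[OF t] unfolding q(1) .
        have h5: "L - Suc n \<ge> 1" using step by simp
        show ?thesis unfolding q(2) by (rule alg1[OF h1 h2 h3 h4 h5])
      qed
    qed
  qed
qed

lemma Elem:
  assumes "j < L"
  shows "\<exists>K. \<forall>t. 0 < t \<longrightarrow> t \<le> \<epsilon> \<longrightarrow> f j t ^ L \<le> K * f 0 t ^ (L - j)"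
  using assms
proof (induction j)
  case 0
  then show ?case by (intro exI[of _ 1]) auto
next
  case (Suc j)
  then obtain K2 where K2: "\<And>t. 0 < t \<Longrightarrow> t \<le> \<epsilon> \<Longrightarrow> f j t ^ L \<le> K2 * f 0 t ^ (L - j)" by auto
  obtain K1 where K1: "\<And>t. 0 < t \<Longrightarrow> t \<le> \<epsilon> \<Longrightarrow>
     f (Suc j) t ^ (L - j) \<le> K1 * f j t ^ (L - Suc j) * f L t" using Dlem[of j] Suc by auto
  define M where "M = f L \<epsilon>"
  show ?case
  proof (intro exI[of _ "max 1 ((max K1 0 * M)^L * (max K2 0)^(L - j - 1))"] allI impI)
    fix t assume t: "0 < t" "t \<le> \<epsilon>"
    have nn: "f j t \<ge> 0" "f (Suc j) t \<ge> 0" "f 0 t \<ge> 0" "f L t \<ge> 0"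
      using nonneg t Suc by auto
    have M: "f L t \<le> M" "M \<ge> 0" unfolding M_def using mono[of L t \<epsilon>] t nonneg[of L \<epsilon>] eps by auto
    have "f (Suc j) t ^ (L - j) \<le> K1 * f j t ^ (L - Suc j) * f L t" using K1 t .
    also have "\<dots> \<le> max K1 0 * f j t ^ (L - Suc j) * f L t"
      using nn by (intro mult_right_mono) auto
    also have "\<dots> \<le> max K1 0 * f j t ^ (L - Suc j) * M"
      using nn M by (intro mult_left_mono) auto
    finally have a: "f (Suc j) t ^ (L - j) \<le> (max K1 0 * M) * f j t ^ (L - j - 1)"
      by (simp add: algebra_simps)
    have b: "f j t ^ L \<le> max K2 0 * f 0 t ^ (L - j)"
      proof -
      have "K2 * f 0 t ^ (L - j) \<le> max K2 0 * f 0 t ^ (L - j)"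
        using nn by (intro mult_right_mono) auto
      then show ?thesis using K2[OF t] by linarith
    qed
    show "f (Suc j) t ^ L \<le> max 1 ((max K1 0 * M)^L * (max K2 0)^(L - j - 1)) * f 0 t ^ (L - Suc j)"
    proof -
      have "L - Suc j = L - j - 1" by simp
      moreover have "max K1 0 * M \<ge> 0" "max K2 0 \<ge> 0" "L - j \<ge> 1" using M Suc by auto
      ultimately show ?thesis using alg2[OF nn(2) nn(1) nn(3) _ _ _ a b] by simp
    qed
  qed
qed

end


lemma endpoint:
  fixes f :: "nat \<Rightarrow> real \<Rightarrow> real" and k n :: nat and \<epsilon>0 :: real
  assumes e0: "\<epsilon>0 > 0"
    and der: "\<And>j s. j < k \<Longrightarrow> 0 \<le> s \<Longrightarrow> s \<le> \<epsilon>0 \<Longrightarrow> (f j has_real_derivative f (Suc j) s) (at s)"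
    and zero: "\<And>j. j < k \<Longrightarrow> f j 0 = 0"
    and cont: "continuous_on {0..\<epsilon>0} (f k)"
    and zs: "finite {s\<in>{0..\<epsilon>0}. f k s = 0}"
    and pos: "\<And>s. 0 < s \<Longrightarrow> s \<le> \<epsilon>0 \<Longrightarrow> f 0 s > 0"
    and n: "n < k - 1"
  shows "\<exists>\<epsilon>>0. \<epsilon> \<le> \<epsilon>0 \<and> (\<exists>K. \<forall>t. 0 < t \<longrightarrow> t \<le> \<epsilon> \<longrightarrow> \<bar>f n t\<bar> ^ (k-1) \<le> K * f 0 t ^ (k-1-n))"
proof -
  define L where "L = k - 1"
  have kL: "k = Suc L" using n unfolding L_def by simp
  define Z where "Z = {s\<in>{0..\<epsilon>0}. f k s = 0} \<inter> {0<..}"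
  have fZ: "finite Z" unfolding Z_def using zs by simp
  obtain \<epsilon> where e: "0 < \<epsilon>" "\<epsilon> \<le> \<epsilon>0" and nz: "\<And>s. 0 < s \<Longrightarrow> s \<le> \<epsilon> \<Longrightarrow> f k s \<noteq> 0"
  proof (cases "Z = {}")
    case True
    show ?thesis by (rule that[of \<epsilon>0]) (use e0 True in \<open>auto simp: Z_def set_eq_iff\<close>)
  next
    case False
    have mZ: "Min Z \<in> Z" using Min_in[OF fZ False] .
    then have mp: "Min Z > 0" "Min Z \<le> \<epsilon>0" unfolding Z_def by auto
    show ?thesis
    proof (rule that[of "Min Z / 2"])
      fix s assume s: "0 < s" "s \<le> Min Z / 2"
      show "f k s \<noteq> 0"
      proof
        assume "f k s = 0"
        then have "s \<in> Z" unfolding Z_def using s mp by auto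
        then have "Min Z \<le> s" using Min_le[OF fZ] by simp
        then show False using s mp by simp
      qed
    qed (use mp in auto)
  qed
  have contE: "continuous_on {a..b} (f k)" if "0 \<le> a" "b \<le> \<epsilon>" for a b
    by (rule continuous_on_subset[OF cont]) (use that e in auto)
  have sign: "(\<forall>s. 0 < s \<longrightarrow> s \<le> \<epsilon> \<longrightarrow> f k s > 0) \<or> (\<forall>s. 0 < s \<longrightarrow> s \<le> \<epsilon> \<longrightarrow> f k s < 0)"
  proof (rule ccontr)
    assume "\<not> ?thesis"
    then obtain a b where a: "0 < a" "a \<le> \<epsilon>" "\<not> f k a > 0" and b: "0 < b" "b \<le> \<epsilon>" "\<not> f k b < 0"
      by auto
    have a': "f k a < 0" using nz[OF a(1,2)] a(3) by simp
    have b': "f k b > 0" using nz[OF b(1,2)] b(3) by simp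
    show False
    proof (cases "a \<le> b")
      case True
      obtain x where "a \<le> x" "x \<le> b" "f k x = 0"
        using IVT'[of "f k" a 0 b] a' b' True contE[of a b] a b by auto
      then show False using nz[of x] a b by auto
    next
      case False
      obtain x where "b \<le> x" "x \<le> a" "f k x = 0"
        using IVT2'[of "f k" a 0 b] a' b' False contE[of b a] a b by auto
      then show False using nz[of x] a b by auto
    qed
  qed
  have cl: "continuous_on (closure {0<..\<epsilon>}) (f k)" using contE[of 0 \<epsilon>] e by simp
  from sign show ?thesis
  proof
    assume P: "\<forall>s. 0 < s \<longrightarrow> s \<le> \<epsilon> \<longrightarrow> f k s > 0"
    have top: "f (Suc L) s \<ge> 0" if "0 \<le> s" "s \<le> \<epsilon>" for s
      using continuous_ge_on_closure[OF cl, of s 0] P that e unfolding kL by (simp add: less_imp_le)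
    interpret chainpos f L \<epsilon>
      by unfold_locales (use e der zero top pos kL in auto)
    obtain K where K: "\<And>t. 0 < t \<Longrightarrow> t \<le> \<epsilon> \<Longrightarrow> f n t ^ L \<le> K * f 0 t ^ (L - n)"
      using Elem[of n] n unfolding L_def by auto
    have "\<forall>t. 0 < t \<longrightarrow> t \<le> \<epsilon> \<longrightarrow> \<bar>f n t\<bar> ^ (k - 1) \<le> K * f 0 t ^ (k - 1 - n)"
    proof (intro allI impI)
      fix t assume t: "0 < t" "t \<le> \<epsilon>"
      have "\<bar>f n t\<bar> = f n t" using nonneg[of n t] t n unfolding L_def by simp
      then show "\<bar>f n t\<bar> ^ (k - 1) \<le> K * f 0 t ^ (k - 1 - n)" using K[OF t] unfolding L_def by simp
    qed
    then show ?thesis using e by blast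
  next
    assume P: "\<forall>s. 0 < s \<longrightarrow> s \<le> \<epsilon> \<longrightarrow> f k s < 0"
    have top: "(- f (Suc L) s) \<ge> 0" if "0 \<le> s" "s \<le> \<epsilon>" for s
      using continuous_le_on_closure[OF cl, of s 0] P that e unfolding kL by fastforce
    interpret chain "\<lambda>j s. - f j s" L \<epsilon>
      by unfold_locales (use e zero top kL in \<open>auto intro!: derivative_eq_intros der\<close>)
    have "- f 0 \<epsilon> \<ge> 0" using nonneg[of 0 \<epsilon>] e by simp
    then show ?thesis using pos[of \<epsilon>] e by simp
  qed
qed



lemma alg3:
  fixes a b K B r :: real and L n :: nat
  assumes a: "a \<ge> 0" and b: "b > 0" "b \<le> B" and ab: "a^L \<le> K * b^(L-n)"
    and r: "r > 1" and e: "r * (real L - real n) \<ge> real L" and L: "L \<ge> 1" and n: "n \<le> L"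
  shows "a / b powr (1/r) \<le> max K 0 powr (1/L) * max 1 B powr ((real L - real n)/L - 1/r)"
proof (cases "a = 0")
  case True
  then show ?thesis by simp
next
  case False
  then have ap: "a > 0" using a by simp
  define e where "e = (real L - real n)/L - 1/r"
  have e0: "e \<ge> 0"
  proof -
    have "1/r \<le> (real L - real n)/L" using e r L by (simp add: field_simps)
    then show ?thesis unfolding e_def by simp
  qed
  have "a powr L \<le> max K 0 * b powr (real (L-n))"
  proof -
    have "K * b^(L-n) \<le> max K 0 * b^(L-n)" using b by (intro mult_right_mono) auto
    moreover have eqs: "a powr L = a^L" "b powr (real (L-n)) = b^(L-n)" using ap b by (simp_all add: powr_realpow)
    ultimately show ?thesis unfolding eqs using ab by linarith
  qed
  then have "(a powr L) powr (1/L) \<le> (max K 0 * b powr (real (L-n))) powr (1/L)"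
    by (intro powr_mono2) (use L in auto)
  also have "(a powr L) powr (1/L) = a" using L ap by (simp add: powr_powr)
  also have "(max K 0 * b powr (real (L-n))) powr (1/L) = max K 0 powr (1/L) * b powr ((real L - real n)/L)"
    using b n by (simp add: powr_mult powr_powr of_nat_diff)
  finally have 1: "a \<le> max K 0 powr (1/L) * b powr ((real L - real n)/L)" .
  have "a / b powr (1/r) \<le> max K 0 powr (1/L) * b powr ((real L - real n)/L) / b powr (1/r)"
    using 1 b by (simp add: divide_right_mono)
  also have "\<dots> = max K 0 powr (1/L) * b powr e"
    unfolding e_def using b by (simp add: powr_diff)
  also have "\<dots> \<le> max K 0 powr (1/L) * max 1 B powr e"
    using b e0 by (intro mult_left_mono powr_mono2) auto
  finally show ?thesis unfolding e_def .
qed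

lemma bnd:
  fixes h :: "real \<Rightarrow> real"
  assumes "continuous_on {a..b} h"
  shows "\<exists>B. \<forall>t\<in>{a..b}. \<bar>h t\<bar> \<le> B"
proof -
  have "compact (h ` {a..b})" by (rule compact_continuous_image[OF assms]) simp
  then have "bounded (h ` {a..b})" by (rule compact_imp_bounded)
  then obtain B where "\<forall>x\<in>h ` {a..b}. norm x \<le> B" by (auto simp: bounded_iff)
  then show ?thesis by auto
qed



theorem lemma4p5:
  fixes p :: ereal and m k :: nat and \<phi> :: "real \<Rightarrow> real"
  assumes p: "1 < p"
    and C: "C0k k \<phi>"
    and supp: "closure {x. \<phi> x \<noteq> 0} \<subseteq> {0..1}"
    and pos: "\<And>t. t \<in> {0<..<1} \<Longrightarrow> \<phi> t > 0"
    and k: "if p = \<infinity> then real k > real m + 1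
            else real k > real m * real_of_ereal p / (real_of_ereal p - 1) + 1"
    and zeros: "finite {t \<in> {0..1}. nderiv k \<phi> t = 0}"
  shows "\<forall>n\<le>m. L_infty_on {0..1}
           (\<lambda>t. \<bar>nderiv n \<phi> t\<bar> /
                 (if p = \<infinity> then 1 else \<bar>\<phi> t\<bar> powr (1 / real_of_ereal p)))"
proof -
  have dif: "\<And>j. j < k \<Longrightarrow> nderiv j \<phi> differentiable_on UNIV"
    and uc: "\<And>j. j \<le> k \<Longrightarrow> uniformly_continuous_on UNIV (nderiv j \<phi>)"
    using C unfolding C0k_def by auto
  have contj: "\<And>j. j \<le> k \<Longrightarrow> continuous_on UNIV (nderiv j \<phi>)"
    using uc uniformly_continuous_imp_continuous by blast
  have nd0: "nderiv 0 \<phi> = \<phi>" by (simp add: nderiv_def)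
  have ndS: "\<And>j. nderiv (Suc j) \<phi> = deriv (nderiv j \<phi>)" by (simp add: nderiv_def)
  have D: "\<And>j x. j < k \<Longrightarrow> DERIV (nderiv j \<phi>) x :> nderiv (Suc j) \<phi> x"
    unfolding ndS using dif by (simp add: DERIV_deriv_iff_real_differentiable differentiable_on_def)
  have out0: "\<phi> x = 0" if "x \<notin> {0..1}" for x
  proof (rule ccontr)
    assume "\<phi> x \<noteq> 0"
    then have "x \<in> {x. \<phi> x \<noteq> 0}" by simp
    then have "x \<in> closure {x. \<phi> x \<noteq> 0}" by (rule closure_subset[THEN subsetD])
    then show False using supp that by (meson subsetD)
  qed
  have outj: "\<forall>x. x \<notin> {0..1} \<longrightarrow> nderiv j \<phi> x = 0" for j
  proof (induction j)
    case 0
    then show ?case using out0 nd0 by simp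
  next
    case (Suc j)
    show ?case
    proof (intro allI impI)
      fix x :: real assume x: "x \<notin> {0..1}"
      have "DERIV (\<lambda>_. 0::real) x :> 0" by simp
      then have "DERIV (nderiv j \<phi>) x :> 0"
        by (rule has_field_derivative_transform_within_open[of _ _ _ "- {0..1}"])
           (use x Suc in auto)
      then show "nderiv (Suc j) \<phi> x = 0" unfolding ndS by (rule DERIV_imp_deriv)
    qed
  qed
  have end0: "nderiv j \<phi> 0 = 0" if "j \<le> k" for j
  proof -
    have c: "continuous_on (closure {..<0}) (nderiv j \<phi>)"
      using continuous_on_subset[OF contj[OF that]] by blast
    have "nderiv j \<phi> 0 \<ge> 0" by (rule continuous_ge_on_closure[OF c]) (use outj in auto)
    moreover have "nderiv j \<phi> 0 \<le> 0" by (rule continuous_le_on_closure[OF c]) (use outj in auto)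
    ultimately show ?thesis by simp
  qed
  have end1: "nderiv j \<phi> 1 = 0" if "j \<le> k" for j
  proof -
    have c: "continuous_on (closure {1<..}) (nderiv j \<phi>)"
      using continuous_on_subset[OF contj[OF that]] by blast
    have "nderiv j \<phi> 1 \<ge> 0" by (rule continuous_ge_on_closure[OF c]) (use outj in auto)
    moreover have "nderiv j \<phi> 1 \<le> 0" by (rule continuous_le_on_closure[OF c]) (use outj in auto)
    ultimately show ?thesis by simp
  qed
  have mk: "m < k - 1"
  proof (cases "p = \<infinity>")
    case True
    then show ?thesis using k by simp
  next
    case False
    then obtain r where r: "p = ereal r" using p by (cases p) auto
    have r1: "r > 1" using p r by simp
    have "real m * r / (r - 1) \<ge> real m"
      using r1 by (simp add: field_simps)
    then show ?thesis using k False r by simp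
  qed
  have cp: "continuous_on {0..1} \<phi>" using continuous_on_subset[OF contj[of 0]] nd0 by simp
  obtain B\<phi> where B\<phi>: "\<And>t. t \<in> {0..1} \<Longrightarrow> \<bar>\<phi> t\<bar> \<le> B\<phi>" using bnd[OF cp] by blast
  show ?thesis
  proof (intro allI impI)
    fix n assume n: "n \<le> m"
    have nk: "n < k - 1" using n mk by simp
    have cn: "continuous_on {0..1} (nderiv n \<phi>)" using continuous_on_subset[OF contj[of n]] nk by simp
    obtain Bn where Bn: "\<And>t. t \<in> {0..1} \<Longrightarrow> \<bar>nderiv n \<phi> t\<bar> \<le> Bn" using bnd[OF cn] by blast
    have mn[measurable]: "nderiv n \<phi> \<in> borel_measurable borel"
      using contj[of n] nk by (intro borel_measurable_continuous_onI) simp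
    have mphi[measurable]: "\<phi> \<in> borel_measurable borel"
      using contj[of 0] nd0 by (intro borel_measurable_continuous_onI) simp
    define h where "h = (\<lambda>t. \<bar>nderiv n \<phi> t\<bar> /
                 (if p = \<infinity> then 1 else \<bar>\<phi> t\<bar> powr (1 / real_of_ereal p)))"
    have hm: "h \<in> borel_measurable borel"
    proof (cases "p = \<infinity>")
      case True
      then show ?thesis unfolding h_def by simp
    next
      case False
      then show ?thesis unfolding h_def by simp measurable
    qed
    have hb: "\<exists>Cb. \<forall>t\<in>{0..1}. \<bar>h t\<bar> \<le> Cb"
    proof (cases "p = \<infinity>")
      case True
      show ?thesis using Bn unfolding h_def True by (intro exI[of _ Bn]) simp
    next
      case False
      then obtain r where r: "p = ereal r" using p by (cases p) auto
      have r1: "r > 1" using p r by simp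
      have rp: "real_of_ereal p = r" using r by simp
      define L where "L = k - 1"
      have L1: "L \<ge> 1" and nL: "n \<le> L" using nk unfolding L_def by auto
      have kr: "real k > real m * r / (r - 1) + 1" using k False rp by simp
      have realL: "real L = real k - 1" using nk unfolding L_def by (simp add: of_nat_diff)
      have "real L * (r - 1) > real m * r"
      proof -
        have "real L > real m * r / (r - 1)" using kr realL by simp
        then show ?thesis using r1 by (simp add: field_simps)
      qed
      then have ex0: "r * (real L - real m) > real L" by (simp add: algebra_simps)
      have "r * (real L - real n) \<ge> r * (real L - real m)"
        using n r1 by (intro mult_left_mono) auto
      then have ex: "r * (real L - real n) \<ge> real L" using ex0 by linarith
      have zs0: "finite {s\<in>{0..1/2}. nderiv k \<phi> s = 0}"
        by (rule finite_subset[OF _ zeros]) auto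
      have ck: "continuous_on {0..1/2} (nderiv k \<phi>)"
        using continuous_on_subset[OF contj[of k]] by simp
      obtain \<epsilon>1 K1 where e1: "0 < \<epsilon>1" "\<epsilon>1 \<le> 1/2"
        and K1: "\<And>t. 0 < t \<Longrightarrow> t \<le> \<epsilon>1 \<Longrightarrow> \<bar>nderiv n \<phi> t\<bar> ^ (k-1) \<le> K1 * nderiv 0 \<phi> t ^ (k-1-n)"
      proof -
        have Dw: "\<And>j s. j < k \<Longrightarrow> 0 \<le> s \<Longrightarrow> s \<le> 1/2 \<Longrightarrow> (nderiv j \<phi> has_real_derivative nderiv (Suc j) \<phi> s) (at s)"
          using D by blast
        have zw: "\<And>j. j < k \<Longrightarrow> nderiv j \<phi> 0 = 0" using end0 by simp
        have pw: "\<And>s. 0 < s \<Longrightarrow> s \<le> 1/2 \<Longrightarrow> nderiv 0 \<phi> s > 0" using pos nd0 by simp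
        have "\<exists>\<epsilon>>0. \<epsilon> \<le> 1/2 \<and> (\<exists>K. \<forall>t. 0 < t \<longrightarrow> t \<le> \<epsilon> \<longrightarrow> \<bar>nderiv n \<phi> t\<bar> ^ (k-1) \<le> K * nderiv 0 \<phi> t ^ (k-1-n))"
          by (rule endpoint[OF _ Dw zw ck zs0 pw nk]) simp
        then show ?thesis using that by blast
      qed
      define g where "g = (\<lambda>j s. (-1)^j * nderiv j \<phi> (1 - s))"
      have gD: "(g j has_real_derivative g (Suc j) s) (at s)" if "j < k" for j s
      proof -
        have "((\<lambda>s. nderiv j \<phi> (1 - s)) has_real_derivative nderiv (Suc j) \<phi> (1-s) * (-1)) (at s)"
          by (rule DERIV_chain2[OF D[OF that]]) (auto intro!: derivative_eq_intros)
        then have "((\<lambda>s. (-1)^j * nderiv j \<phi> (1 - s)) has_real_derivative (-1)^j * (nderiv (Suc j) \<phi> (1-s) * (-1))) (at s)"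
          by (rule DERIV_cmult)
        then show ?thesis unfolding g_def by simp
      qed
      have g0: "g j 0 = 0" if "j < k" for j using end1[of j] that unfolding g_def by simp
      have cg: "continuous_on {0..1/2} (g k)" unfolding g_def
        
      proof -
        have "continuous_on {0..1/2} (\<lambda>s. nderiv k \<phi> (1 - s))"
          by (rule continuous_on_compose2[OF contj[of k]]) (auto intro!: continuous_intros)
        then show "continuous_on {0..1/2} (\<lambda>s. (-1)^k * nderiv k \<phi> (1 - s))"
          by (rule continuous_on_mult_left)
      qed
      have zs1: "finite {s\<in>{0..1/2}. g k s = 0}"
      proof (rule finite_subset[OF _ finite_imageI[OF zeros, of "\<lambda>t. 1 - t"]])
        show "{s \<in> {0..1/2}. g k s = 0} \<subseteq> (\<lambda>t. 1 - t) ` {t \<in> {0..1}. nderiv k \<phi> t = 0}"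
        proof
          fix s assume s: "s \<in> {s \<in> {0..1/2}. g k s = 0}"
          then have "1 - s \<in> {t \<in> {0..1}. nderiv k \<phi> t = 0}" unfolding g_def by auto
          then show "s \<in> (\<lambda>t. 1 - t) ` {t \<in> {0..1}. nderiv k \<phi> t = 0}"
            by (rule image_eqI[rotated]) simp
        qed
      qed
      have gpos: "g 0 s > 0" if "0 < s" "s \<le> 1/2" for s
        using pos[of "1 - s"] that nd0 unfolding g_def by simp
      obtain \<epsilon>2 K2 where e2: "0 < \<epsilon>2" "\<epsilon>2 \<le> 1/2"
        and K2: "\<And>t. 0 < t \<Longrightarrow> t \<le> \<epsilon>2 \<Longrightarrow> \<bar>g n t\<bar> ^ (k-1) \<le> K2 * g 0 t ^ (k-1-n)"
      proof -
        have "\<exists>\<epsilon>>0. \<epsilon> \<le> 1/2 \<and> (\<exists>K. \<forall>t. 0 < t \<longrightarrow> t \<le> \<epsilon> \<longrightarrow> \<bar>g n t\<bar> ^ (k-1) \<le> K * g 0 t ^ (k-1-n))"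
          by (rule endpoint[OF _ gD g0 cg zs1 gpos nk]) simp
        then show ?thesis using that by blast
      qed
      obtain c where c: "c > 0" "\<And>t. t \<in> {\<epsilon>1..1-\<epsilon>2} \<Longrightarrow> \<phi> t \<ge> c"
      proof -
        have "{\<epsilon>1..1-\<epsilon>2} \<noteq> {}" using e1 e2 by simp
        moreover have "continuous_on {\<epsilon>1..1-\<epsilon>2} \<phi>"
          by (rule continuous_on_subset[OF cp]) (use e1 e2 in auto)
        ultimately obtain x0 where x0: "x0 \<in> {\<epsilon>1..1-\<epsilon>2}" "\<And>y. y \<in> {\<epsilon>1..1-\<epsilon>2} \<Longrightarrow> \<phi> x0 \<le> \<phi> y"
          using continuous_attains_inf[of "{\<epsilon>1..1-\<epsilon>2}" \<phi>] by auto
        have "\<phi> x0 > 0" using pos[of x0] x0(1) e1 e2 by simp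
        then show ?thesis using that x0 by blast
      qed
      define ee where "ee = (real L - real n)/L - 1/r"
      define C1 where "C1 = max K1 0 powr (1/L) * max 1 B\<phi> powr ee"
      define C2 where "C2 = max K2 0 powr (1/L) * max 1 B\<phi> powr ee"
      define C3 where "C3 = max Bn 0 / c powr (1/r)"
      have C1: "C1 \<ge> 0" unfolding C1_def by simp
      show ?thesis
      proof (intro exI[of _ "max (max C1 C2) C3"] ballI)
        fix t :: real assume t: "t \<in> {0..1}"
        have h: "h t = \<bar>nderiv n \<phi> t\<bar> / \<bar>\<phi> t\<bar> powr (1/r)" unfolding h_def using False rp by simp
        have hnn: "h t \<ge> 0" unfolding h by simp
        have "h t \<le> max (max C1 C2) C3"
        proof (cases "\<phi> t = 0")
          case True
          then show ?thesis using C1 unfolding h by simp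
        next
          case False
          have t01: "0 < t" "t < 1"
            using t False end0[of 0] end1[of 0] nd0 by (auto simp: less_le)
          then have ph: "\<phi> t > 0" using pos by simp
          have phB: "\<phi> t \<le> B\<phi>" using B\<phi>[OF t] by simp
          show ?thesis
          proof (cases "t \<le> \<epsilon>1")
            case True
            have ab: "\<bar>nderiv n \<phi> t\<bar> ^ L \<le> K1 * \<phi> t ^ (L - n)"
              using K1[OF t01(1) True] nd0 unfolding L_def by simp
            have "h t \<le> C1" unfolding h C1_def ee_def using ph
              by (simp add: alg3[OF _ ph phB ab r1 ex L1 nL])
            then show ?thesis by simp
          next
            case nt1: False
            show ?thesis
            proof (cases "t \<ge> 1 - \<epsilon>2")
              case True
              have s: "0 < 1 - t" "1 - t \<le> \<epsilon>2" using True t01 by auto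
              have ab: "\<bar>nderiv n \<phi> t\<bar> ^ L \<le> K2 * \<phi> t ^ (L - n)"
                using K2[OF s] nd0 unfolding L_def g_def by (simp add: abs_mult)
              have "h t \<le> C2" unfolding h C2_def ee_def using ph
                by (simp add: alg3[OF _ ph phB ab r1 ex L1 nL])
              then show ?thesis by simp
            next
              case False
              then have tm: "t \<in> {\<epsilon>1..1-\<epsilon>2}" using nt1 by simp
              have "\<bar>nderiv n \<phi> t\<bar> / \<bar>\<phi> t\<bar> powr (1/r) \<le> max Bn 0 / c powr (1/r)"
              proof (rule frac_le)
                show "\<bar>nderiv n \<phi> t\<bar> \<le> max Bn 0" using Bn[OF t] by simp
                show "c powr (1/r) \<le> \<bar>\<phi> t\<bar> powr (1/r)"
                  using c(2)[OF tm] c(1) r1 by (intro powr_mono2) auto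
              qed (use c(1) in auto)
              then show ?thesis unfolding h C3_def by simp
            qed
          qed
        qed
        then show "\<bar>h t\<bar> \<le> max (max C1 C2) C3" using hnn by simp
      qed
    qed
    then obtain Cb where Cb: "\<And>t. t\<in>{0..1} \<Longrightarrow> \<bar>h t\<bar> \<le> Cb" by blast
    show "L_infty_on {0..1} h"
      unfolding L_infty_on_def
    proof
      show "h \<in> borel_measurable (restrict_space lborel {0..1})"
        by (rule measurable_restrict_space1) (use hm in simp)
      show "\<exists>C. AE x in lborel. x \<in> {0..1} \<longrightarrow> \<bar>h x\<bar> \<le> C"
        using Cb by (intro exI[of _ Cb] AE_I2) auto
    qed
  qed
qed


end
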